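(* Let $n>1$ be an odd integer, $k\ge1$, and $p$ the smallest prime divisor of $n$. Then $\mathrm{C}^{n,k}_{\mathrm{RDH}}$ is $\frac{1}{p-1}$-secure against substitution attacks: for every function $\mathcal{F}:\mathbb{Z}_n^k\times\mathbb{Z}_n\to\mathbb{Z}_n^k\times\mathbb{Z}_n$, $$\Pr_{\mathbf{m},\mathbf{x}\leftarrow\mathbb{Z}_n^k,\ \mathbf{y}\leftarrow(\mathbb{Z}_n^* )^k}\big[\mathcal{F}(c)\ne c\ \wedge\ \mathcal{D}_{\mathbf{x}\|\mathbf{y}}(\mathcal{F}(c))\ne\bot\big]\le\frac{1}{p-1},\quad\text{where } c=\mathcal{E}_{\mathbf{x}\|\mathbf{y}}(\mathbf{m}).$$
   Context: For $\mathbf{y}\in(\mathbb{Z}_n^* )^k$ and $\mathbf{m}\in\mathbb{Z}_n^k$ let $\Upsilon_{\mathbf{y}}(\mathbf{m})=\sum_{i=1}^k m_iy_i\bmod n$. The code $\mathrm{C}^{n,k}_{\mathrm{RDH}}$ has source states $\mathbb{Z}_n^k$, keys $\mathbf{x}\|\mathbf{y}\in\mathbb{Z}_n^k\times(\mathbb{Z}_n^* )^k$, ciphertexts $\mathbf{c}\|t\in\mathbb{Z}_n^k\times\mathbb{Z}_n$, encryption $\mathcal{E}_{\mathbf{x}\|\mathbf{y}}(\mathbf{m})=(\mathbf{m}+\mathbf{x}\bmod n)\,\|\,\Upsilon_{\mathbf{y}}(\mathbf{m})$, and decryption $\mathcal{D}_{\mathbf{x}\|\mathbf{y}}(\mathbf{c}\|t)=\mathbf{c}-\mathbf{x}\bmod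 n$ if $\Upsilon_{\mathbf{y}}(\mathbf{c}-\mathbf{x})=t$ and $\bot$ otherwise. All random choices are uniform and independent; the forger $\mathcal{F}$ is an arbitrary (computationally unrestricted) function. *)

theory Defs
  imports "HOL-Probability.Probability" "HOL-Computational_Algebra.Primes"
begin

text \<open>Vectors in Z_n^k are extensional functions on {..<k} with values in {0..<n}
  (residues represented by their least nonnegative representatives).\<close>

definition Zn :: "int \<Rightarrow> int set" where
  "Zn n = {0..<n}"

definition Zn_units :: "int \<Rightarrow> int set" where
  "Zn_units n = {a \<in> {0..<n}. coprime a n}"

definition vecs :: "nat \<Rightarrow> int set \<Rightarrow> (nat \<Rightarrow> int) set" where
  "vecs k A = PiE {..<k} (\<lambda>_. A)"

definition Upsilon :: "int \<Rightarrow> nat \<Rightarrow> (nat \<Rightarrow> int) \<Rightarrow> (nat \<Rightarrow> int) \<Rightarrow> int" where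
  "Upsilon n k y m = (\<Sum>i<k. m i * y i) mod n"

definition RDH_enc :: "int \<Rightarrow> nat \<Rightarrow> (nat \<Rightarrow> int) \<Rightarrow> (nat \<Rightarrow> int) \<Rightarrow> (nat \<Rightarrow> int)
    \<Rightarrow> (nat \<Rightarrow> int) \<times> int" where
  "RDH_enc n k x y m = (restrict (\<lambda>i. (m i + x i) mod n) {..<k}, Upsilon n k y m)"

text \<open>Decryption; None plays the role of bottom.\<close>
definition RDH_dec :: "int \<Rightarrow> nat \<Rightarrow> (nat \<Rightarrow> int) \<Rightarrow> (nat \<Rightarrow> int) \<Rightarrow> (nat \<Rightarrow> int) \<times> int
    \<Rightarrow> (nat \<Rightarrow> int) option" where
  "RDH_dec n k x y ct =
     (let d = restrict (\<lambda>i. (fst ct i - x i) mod n) {..<k}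
      in if Upsilon n k y d = snd ct then Some d else None)"

definition ciphertexts :: "int \<Rightarrow> nat \<Rightarrow> ((nat \<Rightarrow> int) \<times> int) set" where
  "ciphertexts n k = vecs k (Zn n) \<times> Zn n"

definition subst_success_prob ::
  "int \<Rightarrow> nat \<Rightarrow> ((nat \<Rightarrow> int) \<times> int \<Rightarrow> (nat \<Rightarrow> int) \<times> int) \<Rightarrow> real" where
  "subst_success_prob n k F =
     measure_pmf.prob
       (pmf_of_set (vecs k (Zn n) \<times> vecs k (Zn n) \<times> vecs k (Zn_units n)))
       {(m, x, y). let c = RDH_enc n k x y m in F c \<noteq> c \<and> RDH_dec n k x y (F c) \<noteq> None}"

end

theory Submission
  imports Defs
begin

lemma sum_upd_mod:
  fixes f :: "nat \<Rightarrow> int"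
  assumes "j < k" "(v - f j) mod n = 0"
  shows "(sum (f(j := v)) {..<k}) mod n = (sum f {..<k}) mod n"
proof -
  have "sum (f(j := v)) {..<k} = v + sum f ({..<k} - {j})"
    using assms(1) by (simp add: sum.remove)
  moreover have "sum f {..<k} = f j + sum f ({..<k} - {j})"
    using assms(1) by (simp add: sum.remove)
  ultimately have "sum (f(j := v)) {..<k} - sum f {..<k} = v - f j" by simp
  then show ?thesis using assms(2) by (metis mod_eq_dvd_iff dvd_eq_mod_eq_0)
qed

lemma enc_upd:
  assumes "j < k" "(a*b) mod n = 1" "n > 0"
  shows "RDH_enc n k (x(j := (fst (RDH_enc n k x y m) j - b*m j) mod n)) (y(j := (a*y j) mod n)) (m(j := (b*m j) mod n)) = RDH_enc n k x y m"
proof -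
  have 1: "restrict (\<lambda>i. ((m(j := (b*m j) mod n)) i + (x(j := (fst (RDH_enc n k x y m) j - b*m j) mod n)) i) mod n) {..<k}
     = restrict (\<lambda>i. (m i + x i) mod n) {..<k}"
    using assms(1) by (auto simp: RDH_enc_def mod_simps)
  have "((b * m j) mod n * ((a * y j) mod n) - m j * y j) mod n = 0"
  proof -
    have "((b * m j) mod n * ((a * y j) mod n)) mod n = ((a*b) * (m j * y j)) mod n"
      by (simp add: mod_mult_eq ac_simps)
    also have "\<dots> = ((a*b) mod n * (m j * y j)) mod n" by (simp add: mod_mult_left_eq)
    finally have "((b * m j) mod n * ((a * y j) mod n)) mod n = (m j * y j) mod n" using assms(2) by simp
    then show ?thesis by (metis dvd_eq_mod_eq_0 mod_eq_dvd_iff)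
  qed
  then have 2: "Upsilon n k (y(j := (a*y j) mod n)) (m(j := (b*m j) mod n)) = Upsilon n k y m"
    unfolding Upsilon_def using sum_upd_mod[OF assms(1), of "(b * m j) mod n * ((a * y j) mod n)" "\<lambda>i. m i * y i" n]
    by (simp add: fun_upd_def if_distrib cong: if_cong)
  show ?thesis using 1 2 by (simp add: RDH_enc_def)
qed

lemma mod_dvd_self: "(n::int) dvd (a mod n - a)"
  unfolding mod_eq_dvd_iff[symmetric] by simp

lemma dec_dvd:
  assumes "0 \<le> t'" "t' < n" "RDH_dec n k x y (u', t') \<noteq> None"
  shows "n dvd ((\<Sum>i<k. (u' i - fst (RDH_enc n k x y m) i) * y i) + snd (RDH_enc n k x y m) - t')"
proof -
  define S1 where "S1 = (\<Sum>i<k. ((u' i - x i) mod n) * y i)"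
  define S2 where "S2 = (\<Sum>i<k. (u' i - fst (RDH_enc n k x y m) i) * y i)"
  define S3 where "S3 = (\<Sum>i<k. m i * y i)"
  have "Upsilon n k y (restrict (\<lambda>i. (u' i - x i) mod n) {..<k}) = t'"
    using assms(3) unfolding RDH_dec_def Let_def by (auto split: if_splits)
  moreover have "(\<Sum>i<k. restrict (\<lambda>i. (u' i - x i) mod n) {..<k} i * y i) = S1"
    unfolding S1_def by (rule sum.cong) auto
  ultimately have "S1 mod n = t'" unfolding Upsilon_def by simp
  then have "S1 - t' = - (S1 mod n - S1)" by simp
  then have d1: "n dvd (S1 - t')"
    using mod_dvd_self[of n S1] by simp
  have d2: "n dvd (S1 - (S2 + S3))"
  proof -
    have "S1 - (S2 + S3) = (\<Sum>i<k. (((u' i - x i) mod n) - (u' i - (m i + x i) mod n) - m i) * y i)"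
      unfolding S1_def S2_def S3_def by (simp add: RDH_enc_def sum_subtractf[symmetric] sum.distrib[symmetric] left_diff_distrib diff_diff_eq distrib_right)
    also have "n dvd \<dots>"
    proof (rule dvd_sum)
      fix i
      have e: "((u' i - x i) mod n) - (u' i - (m i + x i) mod n) - m i
          = (((u' i - x i) mod n) - (u' i - x i)) + (((m i + x i) mod n) - (m i + x i))"
        by simp
      have h: "n dvd (((u' i - x i) mod n) - (u' i - x i)) + (((m i + x i) mod n) - (m i + x i))"
        by (intro dvd_add mod_dvd_self)
      have "n dvd ((u' i - x i) mod n) - (u' i - (m i + x i) mod n) - m i"
        by (subst e) (rule h)
      then show "n dvd (((u' i - x i) mod n) - (u' i - (m i + x i) mod n) - m i) * y i"
        by (rule dvd_mult2)
    qed
    finally show ?thesis .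
  qed
  have d3: "n dvd (snd (RDH_enc n k x y m) - S3)"
    unfolding S3_def by (simp add: RDH_enc_def Upsilon_def mod_dvd_self)
  have "S2 + snd (RDH_enc n k x y m) - t' = (S1 - t') - (S1 - (S2 + S3)) + (snd (RDH_enc n k x y m) - S3)"
    by simp
  then show ?thesis unfolding S2_def[symmetric] by (simp only:) (intro dvd_add dvd_diff d1 d2 d3)
qed

lemma eq_of_dvd:
  fixes a b n :: int
  assumes "0 \<le> a" "a < n" "0 \<le> b" "b < n" "n dvd (a - b)"
  shows "a = b"
  using assms by (metis mod_eq_dvd_iff mod_pos_pos_trivial)

lemma small_coprime:
  fixes d n p :: int
  assumes "n \<noteq> 0" "d \<noteq> 0" "\<bar>d\<bar> < p" "\<forall>q. prime q \<and> q dvd n \<longrightarrow> p \<le> q"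
  shows "coprime d n"
proof (rule ccontr)
  assume nc: "\<not> coprime d n"
  have "gcd d n \<noteq> 0" using assms(1) by simp
  moreover have "\<not> is_unit (gcd d n)" using nc by (simp add: coprime_iff_gcd_eq_1)
  ultimately obtain q where q: "q dvd gcd d n" "prime q" using prime_divisor_exists by blast
  then have "q dvd d" "q dvd n" by auto
  then have "p \<le> q" using assms(4) q(2) by blast
  moreover have "q \<le> \<bar>d\<bar>" using dvd_imp_le_int[OF assms(2) \<open>q dvd d\<close>] by linarith
  ultimately show False using assms(3) by simp
qed

definition ainv :: "int \<Rightarrow> int \<Rightarrow> int" where
  "ainv n a = (SOME b. (a * b) mod n = 1)"

lemma ainv:
  fixes a n :: int
  assumes "coprime a n" "n > 1"
  shows "(a * ainv n a) mod n = 1"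
proof -
  obtain u v where "u * a + v * n = gcd a n" using bezout_int by blast
  then have "u * a + v * n = 1" using assms(1) by (simp add: coprime_iff_gcd_eq_1)
  then have "(a * u) mod n = 1"
    using assms(2) by (metis add.commute mod_mult_self2 mod_pos_pos_trivial mult.commute zero_le_one)
  then have "\<exists>b. (a * b) mod n = 1" by blast
  then show ?thesis unfolding ainv_def by (rule someI_ex)
qed

lemma coprime_of_inv:
  fixes a b n :: int
  assumes "(a * b) mod n = 1"
  shows "coprime a n"
  by (metis assms coprime_1_left coprime_commute coprime_mod_left_iff coprime_mult_left_iff mod_by_0)

definition jdx :: "((nat \<Rightarrow> int) \<times> int \<Rightarrow> (nat \<Rightarrow> int) \<times> int) \<Rightarrow> (nat \<Rightarrow> int) \<times> int \<Rightarrow> nat" where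
  "jdx F c = (LEAST j. fst (F c) j \<noteq> fst c j)"

definition gmap :: "int \<Rightarrow> nat \<Rightarrow> ((nat \<Rightarrow> int) \<times> int \<Rightarrow> (nat \<Rightarrow> int) \<times> int) \<Rightarrow> int
   \<Rightarrow> (nat \<Rightarrow> int) \<times> (nat \<Rightarrow> int) \<times> (nat \<Rightarrow> int) \<Rightarrow> (nat \<Rightarrow> int) \<times> (nat \<Rightarrow> int) \<times> (nat \<Rightarrow> int)" where
  "gmap n k F a w = (case w of (m, x, y) \<Rightarrow>
     (let c = RDH_enc n k x y m; j = jdx F c; b = ainv n a in
      (m(j := (b * m j) mod n), x(j := (fst c j - b * m j) mod n), y(j := (a * y j) mod n))))"

lemma enc_in:
  assumes "n > 0"
  shows "RDH_enc n k x y m \<in> ciphertexts n k"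
  using assms by (auto simp: RDH_enc_def ciphertexts_def vecs_def Zn_def Upsilon_def)

lemma E_elem:
  assumes "n > 1" "\<forall>c \<in> ciphertexts n k. F c \<in> ciphertexts n k"
    and c: "c = RDH_enc n k x y m"
    and ne: "F c \<noteq> c" and dec: "RDH_dec n k x y (F c) \<noteq> None"
  shows "jdx F c < k \<and> \<not> n dvd (fst (F c) (jdx F c) - fst c (jdx F c))
     \<and> n dvd ((\<Sum>i<k. (fst (F c) i - fst c i) * y i) + snd c - snd (F c))"
proof -
  have cin: "c \<in> ciphertexts n k" using enc_in assms(1) c by simp
  then have Fin: "F c \<in> ciphertexts n k" using assms(2) by blast
  obtain u' t' where Fc: "F c = (u', t')" by (cases "F c")
  have t': "0 \<le> t'" "t' < n" using Fin Fc by (auto simp: ciphertexts_def Zn_def)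
  have D: "n dvd ((\<Sum>i<k. (u' i - fst c i) * y i) + snd c - t')"
    using dec_dvd[OF t'] dec Fc c by simp
  have "u' \<noteq> fst c"
  proof
    assume "u' = fst c"
    then have "n dvd (snd c - t')" using D by simp
    moreover have "0 \<le> snd c" "snd c < n" using cin by (auto simp: ciphertexts_def Zn_def)
    ultimately have "snd c = t'" using t' eq_of_dvd by blast
    then show False using ne Fc \<open>u' = fst c\<close> by (cases c) auto
  qed
  then have ex: "\<exists>j. fst (F c) j \<noteq> fst c j" using Fc by auto
  define j where "j = jdx F c"
  have jd: "fst (F c) j \<noteq> fst c j" unfolding j_def jdx_def using LeastI_ex[OF ex] .
  have vin: "fst (F c) \<in> vecs k (Zn n)" "fst c \<in> vecs k (Zn n)"
    using Fin cin by (auto simp: ciphertexts_def)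
  have jk: "j < k"
  proof (rule ccontr)
    assume "\<not> j < k"
    then have "fst (F c) j = undefined" "fst c j = undefined"
      using vin by (auto simp: vecs_def PiE_def extensional_def)
    then show False using jd by simp
  qed
  have r: "0 \<le> fst (F c) j" "fst (F c) j < n" "0 \<le> fst c j" "fst c j < n"
    using vin jk by (auto simp: vecs_def Zn_def PiE_def Pi_def)
  have "\<not> n dvd (fst (F c) j - fst c j)"
    using eq_of_dvd[OF r] jd by blast
  then show ?thesis using jk D Fc j_def by simp
qed

definition Om :: "int \<Rightarrow> nat \<Rightarrow> ((nat \<Rightarrow> int) \<times> (nat \<Rightarrow> int) \<times> (nat \<Rightarrow> int)) set" where
  "Om n k = vecs k (Zn n) \<times> vecs k (Zn n) \<times> vecs k (Zn_units n)"

definition Sset where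
  "Sset n k F = {(m, x, y). let c = RDH_enc n k x y m in F c \<noteq> c \<and> RDH_dec n k x y (F c) \<noteq> None}"

lemma vec_rng: "f \<in> vecs k (Zn n) \<Longrightarrow> i < k \<Longrightarrow> 0 \<le> f i \<and> f i < n"
  by (auto simp: vecs_def Zn_def PiE_def Pi_def)

lemma uvec_rng: "f \<in> vecs k (Zn_units n) \<Longrightarrow> i < k \<Longrightarrow> 0 \<le> f i \<and> f i < n \<and> coprime (f i) n"
  by (auto simp: vecs_def Zn_units_def PiE_def Pi_def)

lemma upd_eqD:
  assumes "f(j := v) = g(j := w)"
  shows "v = w" "\<And>i. i \<noteq> j \<Longrightarrow> f i = g i"
proof -
  show "v = w" using fun_cong[OF assms, of j] by simp
  fix i assume "i \<noteq> j" then show "f i = g i" using fun_cong[OF assms, of i] by simp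
qed

lemma gmap_props:
  assumes n: "n > 1" and Fr: "\<forall>c \<in> ciphertexts n k. F c \<in> ciphertexts n k"
    and w: "(m, x, y) \<in> Om n k \<inter> Sset n k F" and a: "coprime a n"
  defines "c \<equiv> RDH_enc n k x y m"
  defines "j \<equiv> jdx F c"
  shows "gmap n k F a (m, x, y) = (m(j := (ainv n a * m j) mod n), x(j := (fst c j - ainv n a * m j) mod n), y(j := (a * y j) mod n))"
    and "RDH_enc n k (x(j := (fst c j - ainv n a * m j) mod n)) (y(j := (a * y j) mod n)) (m(j := (ainv n a * m j) mod n)) = c"
    and "gmap n k F a (m, x, y) \<in> Om n k"
    and "j < k" "\<not> n dvd (fst (F c) j - fst c j)"
    and "n dvd ((\<Sum>i<k. (fst (F c) i - fst c i) * y i) + snd c - snd (F c))"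
proof -
  show g: "gmap n k F a (m, x, y) = (m(j := (ainv n a * m j) mod n), x(j := (fst c j - ainv n a * m j) mod n), y(j := (a * y j) mod n))"
    unfolding gmap_def c_def j_def Let_def by simp
  have S: "F c \<noteq> c" "RDH_dec n k x y (F c) \<noteq> None" using w unfolding Sset_def c_def Let_def by auto
  have EE: "j < k \<and> \<not> n dvd (fst (F c) j - fst c j)
     \<and> n dvd ((\<Sum>i<k. (fst (F c) i - fst c i) * y i) + snd c - snd (F c))"
    using E_elem[OF n Fr c_def[THEN meta_eq_to_obj_eq] S] unfolding j_def .
  then show "j < k" "\<not> n dvd (fst (F c) j - fst c j)"
    "n dvd ((\<Sum>i<k. (fst (F c) i - fst c i) * y i) + snd c - snd (F c))" by auto
  have inv: "(a * ainv n a) mod n = 1" using ainv[OF a n] .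
  show "RDH_enc n k (x(j := (fst c j - ainv n a * m j) mod n)) (y(j := (a * y j) mod n)) (m(j := (ainv n a * m j) mod n)) = c"
    unfolding c_def using enc_upd[OF _ inv, of j k x y m] EE n by (simp add: c_def)
  have yj: "coprime (y j) n" using w EE uvec_rng[of y k n j] by (auto simp: Om_def)
  have "coprime ((a * y j) mod n) n" using a yj n by (simp add: coprime_mod_left_iff)
  moreover have "0 \<le> (a * y j) mod n" "(a * y j) mod n < n" using n by auto
  ultimately have yin: "(a * y j) mod n \<in> Zn_units n" by (simp add: Zn_units_def)
  have zin: "\<And>t. t mod n \<in> Zn n" using n by (simp add: Zn_def)
  have "j \<in> {..<k}" using EE by simp
  then have ins: "insert j {..<k} = {..<k}" by blast
  show "gmap n k F a (m, x, y) \<in> Om n k"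
    unfolding g using w yin zin PiE_fun_upd[of _ "\<lambda>_. Zn n" j m "{..<k}"]
      PiE_fun_upd[of _ "\<lambda>_. Zn n" j x "{..<k}"] PiE_fun_upd[of _ "\<lambda>_. Zn_units n" j y "{..<k}"]
    by (auto simp: Om_def vecs_def ins)
qed

lemma gmap_same_c:
  assumes n: "n > 1" and Fr: "\<forall>c \<in> ciphertexts n k. F c \<in> ciphertexts n k"
    and w1: "(m1, x1, y1) \<in> Om n k \<inter> Sset n k F" and w2: "(m2, x2, y2) \<in> Om n k \<inter> Sset n k F"
    and a: "coprime a n" and b: "coprime b n"
    and eq: "gmap n k F a (m1, x1, y1) = gmap n k F b (m2, x2, y2)"
  shows "RDH_enc n k x1 y1 m1 = RDH_enc n k x2 y2 m2"
proof -
  note P1 = gmap_props[OF n Fr w1 a] and P2 = gmap_props[OF n Fr w2 b]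
  obtain m' x' y' where g: "gmap n k F a (m1, x1, y1) = (m', x', y')" by (cases "gmap n k F a (m1, x1, y1)") auto
  have "RDH_enc n k x' y' m' = RDH_enc n k x1 y1 m1" using P1(1,2) g by auto
  moreover have "RDH_enc n k x' y' m' = RDH_enc n k x2 y2 m2" using P2(1,2) g eq by auto
  ultimately show ?thesis by simp
qed

lemma gmap_inj:
  assumes n: "n > 1" and Fr: "\<forall>c \<in> ciphertexts n k. F c \<in> ciphertexts n k"
    and w1: "(m1, x1, y1) \<in> Om n k \<inter> Sset n k F" and w2: "(m2, x2, y2) \<in> Om n k \<inter> Sset n k F"
    and a: "coprime a n"
    and eq: "gmap n k F a (m1, x1, y1) = gmap n k F a (m2, x2, y2)"
  shows "(m1, x1, y1) = (m2, x2, y2)"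
proof -
  have cc: "RDH_enc n k x1 y1 m1 = RDH_enc n k x2 y2 m2" using gmap_same_c[OF n Fr w1 w2 a a eq] .
  define c where "c = RDH_enc n k x1 y1 m1"
  define j where "j = jdx F c"
  define b where "b = ainv n a"
  note P1 = gmap_props[OF n Fr w1 a] and P2 = gmap_props[OF n Fr w2 a]
  have jk: "j < k" using P1(4) c_def j_def by simp
  have E: "m1(j := (b * m1 j) mod n) = m2(j := (b * m2 j) mod n)"
          "x1(j := (fst c j - b * m1 j) mod n) = x2(j := (fst c j - b * m2 j) mod n)"
          "y1(j := (a * y1 j) mod n) = y2(j := (a * y2 j) mod n)"
    using P1(1) P2(1) eq cc unfolding c_def j_def b_def by auto
  have r: "m1 \<in> vecs k (Zn n)" "m2 \<in> vecs k (Zn n)" "x1 \<in> vecs k (Zn n)" "x2 \<in> vecs k (Zn n)"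
     "y1 \<in> vecs k (Zn_units n)" "y2 \<in> vecs k (Zn_units n)" using w1 w2 by (auto simp: Om_def)
  have cb: "coprime b n" using ainv[OF a n] coprime_of_inv unfolding b_def
    by (metis mult.commute)
  have "n dvd b * (m1 j - m2 j)"
    using upd_eqD(1)[OF E(1)] by (metis mod_eq_dvd_iff right_diff_distrib)
  then have "n dvd (m1 j - m2 j)" using cb by (metis coprime_commute coprime_dvd_mult_right_iff)
  then have mj: "m1 j = m2 j" using vec_rng[OF r(1) jk] vec_rng[OF r(2) jk] eq_of_dvd by blast
  have "n dvd a * (y1 j - y2 j)"
    using upd_eqD(1)[OF E(3)] by (metis mod_eq_dvd_iff right_diff_distrib)
  then have "n dvd (y1 j - y2 j)" using a by (metis coprime_commute coprime_dvd_mult_right_iff)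
  then have yj: "y1 j = y2 j" using uvec_rng[OF r(5) jk] uvec_rng[OF r(6) jk] eq_of_dvd by blast
  have "(m1 j + x1 j) mod n = (m2 j + x2 j) mod n"
    using cc jk by (auto simp: RDH_enc_def dest!: fun_cong[where x=j])
  then have "n dvd (x1 j - x2 j)" using mj by (metis mod_eq_dvd_iff add_diff_cancel_left)
  then have xj: "x1 j = x2 j" using vec_rng[OF r(3) jk] vec_rng[OF r(4) jk] eq_of_dvd by blast
  have "m1 = m2" using mj upd_eqD(2)[OF E(1)] by (metis ext)
  moreover have "x1 = x2" using xj upd_eqD(2)[OF E(2)] by (metis ext)
  moreover have "y1 = y2" using yj upd_eqD(2)[OF E(3)] by (metis ext)
  ultimately show ?thesis by simp
qed

lemma gmap_disj:
  assumes n: "n > 1" and Fr: "\<forall>c \<in> ciphertexts n k. F c \<in> ciphertexts n k"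
    and w1: "(m1, x1, y1) \<in> Om n k \<inter> Sset n k F" and w2: "(m2, x2, y2) \<in> Om n k \<inter> Sset n k F"
    and a: "coprime a n" and b: "coprime b n" and ab: "coprime (a - b) n"
    and eq: "gmap n k F a (m1, x1, y1) = gmap n k F b (m2, x2, y2)"
  shows False
proof -
  have cc: "RDH_enc n k x1 y1 m1 = RDH_enc n k x2 y2 m2" using gmap_same_c[OF n Fr w1 w2 a b eq] .
  define c where "c = RDH_enc n k x1 y1 m1"
  define j where "j = jdx F c"
  define \<delta> where "\<delta> = (\<lambda>i. fst (F c) i - fst c i)"
  note P1 = gmap_props[OF n Fr w1 a] and P2 = gmap_props[OF n Fr w2 b]
  have jk: "j < k" using P1(4) c_def j_def by simp
  have nd: "\<not> n dvd \<delta> j" using P1(5) c_def j_def \<delta>_def by simp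
  have E: "y1(j := (a * y1 j) mod n) = y2(j := (b * y2 j) mod n)"
    using P1(1) P2(1) eq cc unfolding c_def j_def by auto
  have D1: "n dvd ((\<Sum>i<k. \<delta> i * y1 i) + snd c - snd (F c))" using P1(6) c_def \<delta>_def by simp
  have D2: "n dvd ((\<Sum>i<k. \<delta> i * y2 i) + snd c - snd (F c))" using P2(6) cc c_def \<delta>_def by simp
  have "(\<Sum>i<k. \<delta> i * y1 i) - (\<Sum>i<k. \<delta> i * y2 i) = (\<Sum>i<k. \<delta> i * (y1 i - y2 i))"
    by (simp add: sum_subtractf right_diff_distrib)
  also have "\<dots> = \<delta> j * (y1 j - y2 j) + (\<Sum>i\<in>{..<k} - {j}. \<delta> i * (y1 i - y2 i))"
    using jk by (subst sum.remove[of _ j]) auto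
  also have "(\<Sum>i\<in>{..<k} - {j}. \<delta> i * (y1 i - y2 i)) = 0"
    using upd_eqD(2)[OF E] by (intro sum.neutral) auto
  finally have eqd: "(\<Sum>i<k. \<delta> i * y1 i) - (\<Sum>i<k. \<delta> i * y2 i) = \<delta> j * (y1 j - y2 j)" by simp
  have "n dvd ((\<Sum>i<k. \<delta> i * y1 i) + snd c - snd (F c)) - ((\<Sum>i<k. \<delta> i * y2 i) + snd c - snd (F c))"
    using D1 D2 by (rule dvd_diff)
  then have d1: "n dvd \<delta> j * (y1 j - y2 j)" using eqd by simp
  have d2: "n dvd (a * y1 j - b * y2 j)"
    using upd_eqD(1)[OF E] by (metis mod_eq_dvd_iff)
  have "(a - b) * (\<delta> j * y1 j) = \<delta> j * (a * y1 j - b * y2 j) - b * (\<delta> j * (y1 j - y2 j))"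
    by (simp add: algebra_simps)
  moreover have "n dvd \<delta> j * (a * y1 j - b * y2 j) - b * (\<delta> j * (y1 j - y2 j))"
    using dvd_mult[OF d2, of "\<delta> j"] dvd_mult[OF d1, of b] by (intro dvd_diff)
  ultimately have "n dvd (a - b) * (\<delta> j * y1 j)" by simp
  then have "n dvd \<delta> j * y1 j" using ab by (metis coprime_commute coprime_dvd_mult_right_iff)
  moreover have "coprime (y1 j) n" using w1 jk uvec_rng[of y1 k n j] by (auto simp: Om_def)
  ultimately have "n dvd \<delta> j" by (metis coprime_commute coprime_dvd_mult_left_iff)
  then show False using nd by simp
qed

theorem mainTheorem7:
  fixes n p :: int and k :: nat
    and F :: "(nat \<Rightarrow> int) \<times> int \<Rightarrow> (nat \<Rightarrow> int) \<times> int"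
  assumes "n > 1" and "odd n" and "k \<ge> 1"
    and "prime p" and "p dvd n" and "\<forall>q. prime q \<and> q dvd n \<longrightarrow> p \<le> q"
    and "\<forall>c \<in> ciphertexts n k. F c \<in> ciphertexts n k"
  shows "subst_success_prob n k F \<le> 1 / (real_of_int p - 1)"
proof -
  note n = assms(1) and Fr = assms(7)
  define E where "E = Om n k \<inter> Sset n k F"
  define I where "I = {1..p - 1}"
  have p2: "p \<ge> 2" using assms(4) by (simp add: prime_ge_2_int)
  have cpI: "coprime a n" if "a \<in> I" for a
    using that small_coprime[of n a p] n assms(6) by (auto simp: I_def)
  have cpD: "coprime (a - b) n" if "a \<in> I" "b \<in> I" "a \<noteq> b" for a b
    using that small_coprime[of n "a - b" p] n assms(6) by (auto simp: I_def)
  have finZ1: "finite (Zn n)" by (simp add: Zn_def)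
  have "Zn_units n \<subseteq> Zn n" by (auto simp: Zn_def Zn_units_def)
  then have finZ: "finite (Zn n)" "finite (Zn_units n)" using finZ1 finite_subset by auto
  have finO: "finite (Om n k)" using finZ by (auto simp: Om_def vecs_def intro!: finite_PiE)
  have "(restrict (\<lambda>_. 0) {..<k}, restrict (\<lambda>_. 0) {..<k}, restrict (\<lambda>_. 1) {..<k}) \<in> Om n k"
    using n by (auto simp: Om_def vecs_def Zn_def Zn_units_def)
  then have neO: "Om n k \<noteq> {}" by blast
  define A where "A a = gmap n k F a ` E" for a
  have inj: "inj_on (gmap n k F a) E" if "a \<in> I" for a
  proof (rule inj_onI)
    fix w1 w2 assume "w1 \<in> E" "w2 \<in> E" "gmap n k F a w1 = gmap n k F a w2"
    then show "w1 = w2" using gmap_inj[OF n Fr _ _ cpI[OF that]] unfolding E_def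
      by (cases w1; cases w2) blast
  qed
  have finE: "finite E" using finO by (simp add: E_def)
  have disj: "\<forall>a\<in>I. \<forall>b\<in>I. a \<noteq> b \<longrightarrow> A a \<inter> A b = {}"
  proof (intro ballI impI)
    fix a b assume ab: "a \<in> I" "b \<in> I" "a \<noteq> b"
    show "A a \<inter> A b = {}"
    proof (rule ccontr)
      assume "A a \<inter> A b \<noteq> {}"
      then obtain w1 w2 where w: "w1 \<in> E" "w2 \<in> E" "gmap n k F a w1 = gmap n k F b w2"
        unfolding A_def by blast
      then show False using gmap_disj[OF n Fr _ _ cpI[OF ab(1)] cpI[OF ab(2)] cpD[OF ab]] unfolding E_def
        by (cases w1; cases w2) blast
    qed
  qed
  have "card (\<Union>a\<in>I. A a) = (\<Sum>a\<in>I. card (A a))"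
    using disj finE by (intro card_UN_disjoint) (auto simp: I_def A_def)
  also have "\<dots> = (\<Sum>a\<in>I. card E)" using inj by (simp add: A_def card_image)
  also have "\<dots> = nat (p - 1) * card E" by (simp add: I_def)
  finally have cU: "card (\<Union>a\<in>I. A a) = nat (p - 1) * card E" .
  have "(\<Union>a\<in>I. A a) \<subseteq> Om n k"
    using gmap_props(3)[OF n Fr] cpI unfolding A_def E_def by force
  then have "card (\<Union>a\<in>I. A a) \<le> card (Om n k)" using finO by (rule card_mono[rotated])
  then have le: "nat (p - 1) * card E \<le> card (Om n k)" using cU by simp
  have cO: "card (Om n k) > 0" using finO neO by (simp add: card_gt_0_iff)
  have "subst_success_prob n k F = real (card E) / real (card (Om n k))"
    unfolding subst_success_prob_def E_def
    using measure_pmf_of_set[OF neO finO] by (simp add: Om_def Sset_def)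
  also have "\<dots> \<le> 1 / (real_of_int p - 1)"
  proof -
    have "real (nat (p - 1) * card E) \<le> real (card (Om n k))" using le by linarith
    then have "(real_of_int p - 1) * real (card E) \<le> real (card (Om n k))"
      using p2 by simp
    then show ?thesis using cO p2 by (simp add: field_simps)
  qed
  finally show ?thesis .
qed
end
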